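(* Let $\mu$ be a non-homogeneous Gibbs capacity and $\eta\in(0,1)$. Almost surely, there exists a positive sequence $(\epsilon^1_j)_{j\ge1}$ converging to $0$ such that for $j$ large enough, for all $w\in\mathcal S_j(\eta)$, $$j\big(H_\ell(\eta_\ell)-\epsilon^1_j\big)\le-\log_2\mu(I_w)\le j\big(H_r(\eta_r)+\epsilon^1_j\big).$$
   Context: Fix $d\ge1$; $\Sigma_j$ is the set of words of length $j$ over $\{0,1\}^d$, $\Sigma^*=\bigcup_{j\ge1}\Sigma_j$, $\Sigma=(\{0,1\}^d)^{\mathbb N_+}$ with standard ultrametric and shift $\sigma$, $[w]$ the cylinder of $w$, $|w|$ the length; for $w\in\Sigma_j$, $I_w=\prod_{i=1}^d[x_w^{(i)},x_w^{(i)}+2^{-j}]$, $x_w^{(i)}=\sum_{k=1}^jw_k^{(i)}2^{-k}$. A Gibbs capacity is $\mu(I_w)=K\nu([w])^\alpha e^{-\beta|w|}$ with $K>0$, $(\alpha,\beta)\in[0,\infty)^2\setminus\{(0,0)\}$, where $\nu$ is a Gibbs measure on $\Sigma$ for a Hölder potential $\psi$: $C^{-1}e^{\Psi([w])-|w|P(\sigma,\psi)}\le\nu([w])\le Ce^{\Psi([w])-|w|P(\sigma,\psi)}$ with $\Psi([w])=\sup_{t\in[w]}\sum_{i<|w|}\psi(\sigma^it)$, $P$ the topological pressure. Non-homogeneous: $\alpha>0$ and $\psi$ not cohomologous to a constant. $\tau_\mu(q)=\lim_j-\frac1j\log_2\sum_{w\in\Sigma_j}\mu(I_w)^q$; $H_{\min}=\tau_\mu'(+\infty)<H_s=\tau_\mu'(0)<H_{\max}=\tau_\mu'(-\infty)$;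 $D_\mu=\tau_\mu^*$ (Legendre transform), finite exactly on $[H_{\min},H_{\max}]$, strictly concave, maximal $=d$ at $H_s$. $H_\ell(\eta_\ell)=\min\{H\ge0:D_\mu(H)\ge d(1-\eta)\}$ and $H_r(\eta_r)=\max\{H:D_\mu(H)\ge d(1-\eta)\}$. Sampling: $(p_w)_{w\in\Sigma^*}$ independent Bernoulli with $\mathbb P(p_w=1)=2^{-d(1-\eta)|w|}$, $\mathcal S_j(\eta)=\{w\in\Sigma_j:p_w=1\}$. *)

theory Defs
  imports "HOL-Probability.Probability"
begin

text \<open>Letters of the alphabet {0,1}^d are boolean lists of length d; words are lists of letters;
  points of Sigma are sequences indexed by nat (index 0 plays the role of index 1).\<close>

definition letters :: "nat \<Rightarrow> bool list set" where
  "letters d = {x. length x = d}"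

definition words :: "nat \<Rightarrow> nat \<Rightarrow> bool list list set" where
  "words d j = {w. length w = j \<and> set w \<subseteq> letters d}"

definition allwords :: "nat \<Rightarrow> bool list list set" where
  "allwords d = {w. 1 \<le> length w \<and> set w \<subseteq> letters d}"

definition seqs :: "nat \<Rightarrow> (nat \<Rightarrow> bool list) set" where
  "seqs d = {t. \<forall>i. t i \<in> letters d}"

definition shift :: "(nat \<Rightarrow> bool list) \<Rightarrow> (nat \<Rightarrow> bool list)" where
  "shift t = (\<lambda>i. t (Suc i))"

definition cyl :: "nat \<Rightarrow> bool list list \<Rightarrow> (nat \<Rightarrow> bool list) set" where
  "cyl d w = {t \<in> seqs d. \<forall>i<length w. t i = w ! i}"

definition birkhoff :: "((nat \<Rightarrow> bool list) \<Rightarrow> real) \<Rightarrow> nat \<Rightarrow> (nat \<Rightarrow> bool list) \<Rightarrow> real" where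
  "birkhoff \<psi> n t = (\<Sum>i<n. \<psi> ((shift ^^ i) t))"

definition Psi :: "nat \<Rightarrow> ((nat \<Rightarrow> bool list) \<Rightarrow> real) \<Rightarrow> bool list list \<Rightarrow> real" where
  "Psi d \<psi> w = (SUP t\<in>cyl d w. birkhoff \<psi> (length w) t)"

definition pressure :: "nat \<Rightarrow> ((nat \<Rightarrow> bool list) \<Rightarrow> real) \<Rightarrow> real" where
  "pressure d \<psi> = lim (\<lambda>n. ln (\<Sum>w\<in>words d n. exp (Psi d \<psi> w)) / real n)"

text \<open>Hoelder continuity w.r.t. the standard ultrametric (distance b^(-n), n = first index of
  disagreement), written out.\<close>
definition holder :: "nat \<Rightarrow> ((nat \<Rightarrow> bool list) \<Rightarrow> real) \<Rightarrow> bool" where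
  "holder d \<psi> \<longleftrightarrow> (\<exists>C \<gamma>. \<gamma> > 0 \<and> (\<forall>s\<in>seqs d. \<forall>t\<in>seqs d. \<forall>n.
      (\<forall>i<n. s i = t i) \<longrightarrow> \<bar>\<psi> s - \<psi> t\<bar> \<le> C * exp (- \<gamma> * real n)))"

definition seq_continuous :: "nat \<Rightarrow> ((nat \<Rightarrow> bool list) \<Rightarrow> real) \<Rightarrow> bool" where
  "seq_continuous d u \<longleftrightarrow> (\<forall>t\<in>seqs d. \<forall>e>0. \<exists>n. \<forall>s\<in>seqs d.
      (\<forall>i<n. s i = t i) \<longrightarrow> \<bar>u s - u t\<bar> < e)"

definition cohom_const :: "nat \<Rightarrow> ((nat \<Rightarrow> bool list) \<Rightarrow> real) \<Rightarrow> bool" where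
  "cohom_const d \<psi> \<longleftrightarrow> (\<exists>u c. seq_continuous d u \<and>
      (\<forall>t\<in>seqs d. \<psi> t = c + u (shift t) - u t))"

text \<open>Gibbs (probability) measure on Sigma (Borel sigma-algebra = generated by cylinders).\<close>
definition gibbs_measure :: "nat \<Rightarrow> ((nat \<Rightarrow> bool list) \<Rightarrow> real) \<Rightarrow> (nat \<Rightarrow> bool list) measure \<Rightarrow> bool" where
  "gibbs_measure d \<psi> \<nu> \<longleftrightarrow> prob_space \<nu> \<and> space \<nu> = seqs d \<and>
     sets \<nu> = sigma_sets (seqs d) (range (cyl d)) \<and>
     (\<exists>C>0. \<forall>w\<in>allwords d.
        exp (Psi d \<psi> w - real (length w) * pressure d \<psi>) / C \<le> measure \<nu> (cyl d w) \<and>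
        measure \<nu> (cyl d w) \<le> C * exp (Psi d \<psi> w - real (length w) * pressure d \<psi>))"

text \<open>Gibbs capacity: value mu(I_w) as a function of the word w.\<close>
definition cap :: "nat \<Rightarrow> real \<Rightarrow> real \<Rightarrow> real \<Rightarrow> (nat \<Rightarrow> bool list) measure \<Rightarrow> bool list list \<Rightarrow> real" where
  "cap d K \<alpha> \<beta> \<nu> w = K * measure \<nu> (cyl d w) powr \<alpha> * exp (- \<beta> * real (length w))"

definition tau :: "nat \<Rightarrow> (bool list list \<Rightarrow> real) \<Rightarrow> real \<Rightarrow> real" where
  "tau d \<mu> q = lim (\<lambda>j. - log 2 (\<Sum>w\<in>words d j. \<mu> w powr q) / real j)"

text \<open>D_mu = Legendre transform of tau_mu (value -infinity outside [H_min,H_max]).\<close>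
definition Dmu :: "nat \<Rightarrow> (bool list list \<Rightarrow> real) \<Rightarrow> real \<Rightarrow> ereal" where
  "Dmu d \<mu> H = (INF q. ereal (q * H - tau d \<mu> q))"

definition Hl :: "nat \<Rightarrow> (bool list list \<Rightarrow> real) \<Rightarrow> real \<Rightarrow> real" where
  "Hl d \<mu> \<eta> = Inf {H. H \<ge> 0 \<and> Dmu d \<mu> H \<ge> ereal (real d * (1 - \<eta>))}"

definition Hr :: "nat \<Rightarrow> (bool list list \<Rightarrow> real) \<Rightarrow> real \<Rightarrow> real" where
  "Hr d \<mu> \<eta> = Sup {H. Dmu d \<mu> H \<ge> ereal (real d * (1 - \<eta>))}"

end

theory Submission
  imports Defs
begin


lemma shift_pow: "(shift ^^ i) t = (\<lambda>k. t (k + i))"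
  by (induction i arbitrary: t) (auto simp: shift_def)

lemma letters_repl: "replicate d False \<in> letters d"
  by (simp add: letters_def)

lemma seqs_shift_pow: "t \<in> seqs d \<Longrightarrow> (shift ^^ i) t \<in> seqs d"
  by (simp add: seqs_def shift_pow)

definition ext :: "nat \<Rightarrow> bool list list \<Rightarrow> (nat \<Rightarrow> bool list)" where
  "ext d w = (\<lambda>i. if i < length w then w ! i else replicate d False)"

lemma ext_cyl: "set w \<subseteq> letters d \<Longrightarrow> ext d w \<in> cyl d w"
  by (auto simp: ext_def cyl_def seqs_def letters_repl)

lemma birkhoff_add: "birkhoff \<psi> (m + n) t = birkhoff \<psi> m t + birkhoff \<psi> n ((shift ^^ m) t)"
  by (induction n) (auto simp: birkhoff_def shift_pow add.commute add.left_commute)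

lemma cyl_append: assumes "t \<in> cyl d (u @ v)"
  shows "t \<in> cyl d u" "(shift ^^ length u) t \<in> cyl d v"
  using assms by (auto simp: cyl_def shift_pow seqs_def nth_append
     dest: spec[where x="_ + length u"])

lemma finite_letters: "finite (letters d)"
proof -
  have "letters d = {xs. set xs \<subseteq> (UNIV::bool set) \<and> length xs = d}" by (auto simp: letters_def)
  then show ?thesis using finite_lists_length_eq[of "UNIV::bool set" d] by simp
qed

lemma card_letters: "card (letters d) = 2 ^ d"
proof -
  have "letters d = {xs. set xs \<subseteq> (UNIV::bool set) \<and> length xs = d}" by (auto simp: letters_def)
  then show ?thesis using card_lists_length_eq[of "UNIV::bool set" d] by simp
qed

lemma words_eq: "words d j = {xs. set xs \<subseteq> letters d \<and> length xs = j}"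
  by (auto simp: words_def)

lemma finite_words: "finite (words d j)"
  unfolding words_eq by (rule finite_lists_length_eq[OF finite_letters])

lemma card_words: "card (words d j) = 2 ^ (d * j)"
  unfolding words_eq by (simp add: card_lists_length_eq[OF finite_letters] card_letters power_mult)

lemma words_ne: "words d j \<noteq> {}"
  using letters_repl[of d] by (auto simp: words_def intro!: exI[where x="replicate j (replicate d False)"])

lemma words_allwords: "j \<ge> 1 \<Longrightarrow> w \<in> words d j \<Longrightarrow> w \<in> allwords d"
  by (auto simp: words_def allwords_def)

lemma words_append: "words d (m + n) = (\<lambda>(u,v). u @ v) ` (words d m \<times> words d n)"
proof (rule set_eqI, rule iffI)
  fix w assume "w \<in> words d (m + n)"
  then show "w \<in> (\<lambda>(u,v). u @ v) ` (words d m \<times> words d n)"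
    apply (auto simp: words_def image_iff)
    apply (rule exI[where x="take m w"])
    apply (auto dest: in_set_takeD)
    apply (rule exI[where x="drop m w"])
    by (auto dest: in_set_dropD)
qed (auto simp: words_def)

lemma inj_append_words: "inj_on (\<lambda>(u,v). u @ v) (words d m \<times> words d n)"
  by (auto simp: inj_on_def words_def)



lemma geom_bound: assumes "0 < (r::real)" "r < 1" shows "(\<Sum>i<n. r ^ (n - i)) \<le> 1 / (1 - r)"
proof -
  have "(\<Sum>i<n. r ^ (n - i)) = (\<Sum>i<n. (\<lambda>k. r ^ Suc k) (n - Suc i))"
    by (rule sum.cong) (auto simp: Suc_diff_Suc)
  also have "\<dots> = (\<Sum>i<n. r ^ Suc i)" by (rule sum.nat_diff_reindex)
  also have "\<dots> = r * (\<Sum>i<n. r ^ i)" by (simp add: sum_distrib_left)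
  also have "\<dots> = r * ((1 - r ^ n) / (1 - r))" using assms by (simp add: sum_gp_strict)
  also have "\<dots> \<le> 1 / (1 - r)"
  proof -
    have "r * (1 - r ^ n) \<le> 1" using assms
      by (smt (verit) mult_le_one power_le_one zero_le_power)
    then show ?thesis using assms by (simp add: divide_right_mono)
  qed
  finally show ?thesis .
qed

lemma ah1: assumes "(a::real) \<ge> 0" shows "\<bar>- k + a*X\<bar> \<le> \<bar>k\<bar> + a*\<bar>X\<bar>"
proof -
  have "\<bar>a*X\<bar> = a*\<bar>X\<bar>" using assms by (simp add: abs_mult)
  then show ?thesis by linarith
qed

lemma ah2: assumes "(a::real) \<ge> 0" "b \<ge> 0" "n \<ge> 0" shows "\<bar>k + a*Y - b*n\<bar> \<le> \<bar>k\<bar> + a*\<bar>Y\<bar> + b*n"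
proof -
  have "\<bar>a*Y\<bar> = a*\<bar>Y\<bar>" using assms by (simp add: abs_mult)
  moreover have "b*n \<ge> 0" using assms by simp
  ultimately show ?thesis by linarith
qed

locale gc =
  fixes d :: nat and K \<alpha> \<beta> :: real and \<psi> :: "(nat \<Rightarrow> bool list) \<Rightarrow> real"
    and \<nu> :: "(nat \<Rightarrow> bool list) measure"
  assumes d1: "d \<ge> 1" and Kpos: "K > 0" and apos: "\<alpha> > 0" and bnn: "\<beta> \<ge> 0"
    and hold: "holder d \<psi>" and gibbs: "gibbs_measure d \<psi> \<nu>"
begin

lemma psi_bound: obtains B where "B \<ge> 0" "\<And>s. s \<in> seqs d \<Longrightarrow> \<bar>\<psi> s\<bar> \<le> B"
proof -
  obtain C \<gamma> where H: "\<forall>s\<in>seqs d. \<forall>t\<in>seqs d. \<forall>n.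
      (\<forall>i<n. s i = t i) \<longrightarrow> \<bar>\<psi> s - \<psi> t\<bar> \<le> C * exp (- \<gamma> * real n)"
    using hold unfolding holder_def by blast
  define t0 where "t0 = ext d []"
  have t0: "t0 \<in> seqs d" using ext_cyl[of "[]" d] by (simp add: t0_def cyl_def)
  have "\<bar>\<psi> s\<bar> \<le> \<bar>\<psi> t0\<bar> + \<bar>C\<bar>" if "s \<in> seqs d" for s
    using H[rule_format, OF that t0, of 0] by simp
  then show ?thesis using that[of "\<bar>\<psi> t0\<bar> + \<bar>C\<bar>"] by simp
qed

lemma distortion: obtains D where "D \<ge> 0"
  "\<And>w s t. s \<in> cyl d w \<Longrightarrow> t \<in> cyl d w \<Longrightarrow> birkhoff \<psi> (length w) s \<le> birkhoff \<psi> (length w) t + D"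
proof -
  obtain C \<gamma> where g: "\<gamma> > 0" and H: "\<forall>s\<in>seqs d. \<forall>t\<in>seqs d. \<forall>n.
      (\<forall>i<n. s i = t i) \<longrightarrow> \<bar>\<psi> s - \<psi> t\<bar> \<le> C * exp (- \<gamma> * real n)"
    using hold unfolding holder_def by blast
  define t0 where "t0 = ext d []"
  have t0: "t0 \<in> seqs d" using ext_cyl[of "[]" d] by (simp add: t0_def cyl_def)
  have C0: "C \<ge> 0" using H[rule_format, OF t0 t0, of 0] by simp
  define r where "r = exp (- \<gamma>)"
  have r: "0 < r" "r < 1" using g by (auto simp: r_def)
  have main: "birkhoff \<psi> (length w) s \<le> birkhoff \<psi> (length w) t + C / (1 - r)"
    if s: "s \<in> cyl d w" and t: "t \<in> cyl d w" for w s t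
  proof -
    define n where "n = length w"
    have ss: "s \<in> seqs d" "t \<in> seqs d" using s t by (auto simp: cyl_def)
    have "\<psi> ((shift ^^ i) s) - \<psi> ((shift ^^ i) t) \<le> C * r ^ (n - i)" if "i < n" for i
    proof -
      have "\<forall>k<n - i. (shift ^^ i) s k = (shift ^^ i) t k"
        using s t that by (auto simp: shift_pow cyl_def n_def)
      then have "\<bar>\<psi> ((shift ^^ i) s) - \<psi> ((shift ^^ i) t)\<bar> \<le> C * exp (- \<gamma> * real (n - i))"
        using H seqs_shift_pow ss by blast
      also have "exp (- \<gamma> * real (n - i)) = r ^ (n - i)"
        by (simp add: r_def mult.commute exp_of_nat_mult[symmetric])
      finally show ?thesis by simp
    qed
    then have "birkhoff \<psi> n s - birkhoff \<psi> n t \<le> (\<Sum>i<n. C * r ^ (n - i))"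
      unfolding birkhoff_def sum_subtractf[symmetric] by (intro sum_mono) auto
    also have "\<dots> = C * (\<Sum>i<n. r ^ (n - i))" by (simp add: sum_distrib_left)
    also have "\<dots> \<le> C * (1 / (1 - r))" using geom_bound[OF r] C0 by (intro mult_left_mono) auto
    finally show ?thesis by (simp add: n_def)
  qed
  show ?thesis using that[of "C / (1 - r)"] main C0 r by auto
qed


definition DD where "DD = (SOME D. D \<ge> 0 \<and> (\<forall>w s t. s \<in> cyl d w \<longrightarrow> t \<in> cyl d w \<longrightarrow>
   birkhoff \<psi> (length w) s \<le> birkhoff \<psi> (length w) t + D))"

lemma DD: "DD \<ge> 0" "\<And>w s t. s \<in> cyl d w \<Longrightarrow> t \<in> cyl d w \<Longrightarrow>
   birkhoff \<psi> (length w) s \<le> birkhoff \<psi> (length w) t + DD"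
proof -
  have "\<exists>D. D \<ge> 0 \<and> (\<forall>w s t. s \<in> cyl d w \<longrightarrow> t \<in> cyl d w \<longrightarrow>
   birkhoff \<psi> (length w) s \<le> birkhoff \<psi> (length w) t + D)"
    using distortion by metis
  from someI_ex[OF this] show "DD \<ge> 0" "\<And>w s t. s \<in> cyl d w \<Longrightarrow> t \<in> cyl d w \<Longrightarrow>
   birkhoff \<psi> (length w) s \<le> birkhoff \<psi> (length w) t + DD"
    unfolding DD_def by auto
qed

definition Bp where "Bp = (SOME B. B \<ge> 0 \<and> (\<forall>s\<in>seqs d. \<bar>\<psi> s\<bar> \<le> B))"

lemma Bp: "Bp \<ge> 0" "\<And>s. s \<in> seqs d \<Longrightarrow> \<bar>\<psi> s\<bar> \<le> Bp"
proof -
  have "\<exists>B. B \<ge> 0 \<and> (\<forall>s\<in>seqs d. \<bar>\<psi> s\<bar> \<le> B)"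
    using psi_bound by metis
  from someI_ex[OF this] show "Bp \<ge> 0" "\<And>s. s \<in> seqs d \<Longrightarrow> \<bar>\<psi> s\<bar> \<le> Bp"
    unfolding Bp_def by auto
qed

lemma birkhoff_abs: assumes "t \<in> seqs d" shows "\<bar>birkhoff \<psi> n t\<bar> \<le> real n * Bp"
proof -
  have "\<bar>birkhoff \<psi> n t\<bar> \<le> (\<Sum>i<n. \<bar>\<psi> ((shift ^^ i) t)\<bar>)"
    unfolding birkhoff_def by (rule sum_abs)
  also have "\<dots> \<le> (\<Sum>i<n. Bp)" by (intro sum_mono Bp(2) seqs_shift_pow assms)
  finally show ?thesis by simp
qed

lemma Psi_sandwich: assumes "set w \<subseteq> letters d" "t \<in> cyl d w"
  shows "birkhoff \<psi> (length w) t \<le> Psi d \<psi> w" "Psi d \<psi> w \<le> birkhoff \<psi> (length w) t + DD"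
proof -
  have bdd: "bdd_above ((\<lambda>s. birkhoff \<psi> (length w) s) ` cyl d w)"
    using DD(2)[OF _ assms(2)] by (auto simp: bdd_above_def)
  show "birkhoff \<psi> (length w) t \<le> Psi d \<psi> w"
    unfolding Psi_def by (rule cSUP_upper[OF assms(2) bdd])
  show "Psi d \<psi> w \<le> birkhoff \<psi> (length w) t + DD"
    unfolding Psi_def using assms(2) by (intro cSUP_least DD(2)[OF _ assms(2)]) auto
qed

lemma Psi_abs: assumes "set w \<subseteq> letters d" shows "\<bar>Psi d \<psi> w\<bar> \<le> real (length w) * Bp + DD"
proof -
  have t: "ext d w \<in> cyl d w" "ext d w \<in> seqs d" using ext_cyl[OF assms] by (auto simp: cyl_def)
  show ?thesis using Psi_sandwich[OF assms t(1)] birkhoff_abs[OF t(2), of "length w"] DD(1) by linarith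
qed

lemma Psi_add: assumes "set u \<subseteq> letters d" "set v \<subseteq> letters d"
  shows "\<bar>Psi d \<psi> (u @ v) - Psi d \<psi> u - Psi d \<psi> v\<bar> \<le> 2 * DD"
proof -
  have uv: "set (u @ v) \<subseteq> letters d" using assms by auto
  define t where "t = ext d (u @ v)"
  have t: "t \<in> cyl d (u @ v)" using ext_cyl[OF uv] by (simp add: t_def)
  note c = cyl_append[OF t]
  note b = birkhoff_add[of \<psi> "length u" "length v" t]
  show ?thesis using Psi_sandwich[OF uv t] Psi_sandwich[OF assms(1) c(1)] Psi_sandwich[OF assms(2) c(2)] b
    by simp
qed

definition Cg where "Cg = (SOME C. C > 0 \<and> (\<forall>w\<in>allwords d.
        exp (Psi d \<psi> w - real (length w) * pressure d \<psi>) / C \<le> measure \<nu> (cyl d w) \<and>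
        measure \<nu> (cyl d w) \<le> C * exp (Psi d \<psi> w - real (length w) * pressure d \<psi>)))"

lemma Cg: "Cg > 0" "\<And>w. w \<in> allwords d \<Longrightarrow>
        exp (Psi d \<psi> w - real (length w) * pressure d \<psi>) / Cg \<le> measure \<nu> (cyl d w) \<and>
        measure \<nu> (cyl d w) \<le> Cg * exp (Psi d \<psi> w - real (length w) * pressure d \<psi>)"
proof -
  have "\<exists>C. C > 0 \<and> (\<forall>w\<in>allwords d.
        exp (Psi d \<psi> w - real (length w) * pressure d \<psi>) / C \<le> measure \<nu> (cyl d w) \<and>
        measure \<nu> (cyl d w) \<le> C * exp (Psi d \<psi> w - real (length w) * pressure d \<psi>))"
    using gibbs unfolding gibbs_measure_def by blast
  from someI_ex[OF this] show "Cg > 0" "\<And>w. w \<in> allwords d \<Longrightarrow>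
        exp (Psi d \<psi> w - real (length w) * pressure d \<psi>) / Cg \<le> measure \<nu> (cyl d w) \<and>
        measure \<nu> (cyl d w) \<le> Cg * exp (Psi d \<psi> w - real (length w) * pressure d \<psi>)"
    unfolding Cg_def by auto
qed

abbreviation "PP \<equiv> pressure d \<psi>"

lemma nu_pos: assumes "w \<in> allwords d"
  shows "measure \<nu> (cyl d w) > 0"
    "\<bar>ln (measure \<nu> (cyl d w)) - (Psi d \<psi> w - real (length w) * PP)\<bar> \<le> \<bar>ln Cg\<bar>"
proof -
  define x where "x = Psi d \<psi> w - real (length w) * PP"
  define m where "m = measure \<nu> (cyl d w)"
  have h: "exp x / Cg \<le> m" "m \<le> Cg * exp x" using Cg(2)[OF assms] by (auto simp: x_def m_def)
  have "exp x / Cg > 0" using Cg(1) by simp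
  then have mp: "m > 0" using h by linarith
  then show "measure \<nu> (cyl d w) > 0" by (simp add: m_def)
  have "ln (exp x / Cg) \<le> ln m" using h(1) \<open>exp x / Cg > 0\<close> by simp
  then have l1: "x - ln Cg \<le> ln m" using Cg(1) by (simp add: ln_div)
  have "ln m \<le> ln (Cg * exp x)" using h(2) mp by simp
  then have l2: "ln m \<le> ln Cg + x" using Cg(1) by (simp add: ln_mult)
  show "\<bar>ln (measure \<nu> (cyl d w)) - (Psi d \<psi> w - real (length w) * PP)\<bar> \<le> \<bar>ln Cg\<bar>"
    using l1 l2 unfolding x_def[symmetric] m_def[symmetric] by linarith
qed

abbreviation "mu \<equiv> cap d K \<alpha> \<beta> \<nu>"

lemma mu_pos: assumes "w \<in> allwords d"
  shows "mu w > 0" "ln (mu w) = ln K + \<alpha> * ln (measure \<nu> (cyl d w)) - \<beta> * real (length w)"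
proof -
  have m: "measure \<nu> (cyl d w) > 0" using nu_pos[OF assms] by simp
  show "mu w > 0" using m Kpos by (simp add: cap_def)
  show "ln (mu w) = ln K + \<alpha> * ln (measure \<nu> (cyl d w)) - \<beta> * real (length w)"
    using m Kpos by (simp add: cap_def ln_mult ln_powr)
qed

lemma mu_le_K: assumes "w \<in> allwords d" shows "mu w \<le> K"
proof -
  have ps: "prob_space \<nu>" using gibbs by (simp add: gibbs_measure_def)
  have m: "measure \<nu> (cyl d w) \<le> 1" using prob_space.prob_le_1[OF ps] .
  have m0: "measure \<nu> (cyl d w) \<ge> 0" by simp
  have "measure \<nu> (cyl d w) powr \<alpha> \<le> 1" using m m0 apos by (simp add: powr_le1)
  moreover have "exp (- \<beta> * real (length w)) \<le> 1" using bnn by simp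
  ultimately show ?thesis unfolding cap_def using Kpos
    by (simp add: mult_le_one mult.assoc mult_left_le)
qed

definition "GG = \<bar>ln K\<bar> + \<alpha> * (3 * \<bar>ln Cg\<bar> + 2 * DD)"

lemma ln_mu_add: assumes "u \<in> allwords d" "v \<in> allwords d"
  shows "\<bar>ln (mu (u @ v)) - ln (mu u) - ln (mu v)\<bar> \<le> GG"
proof -
  have uv: "u @ v \<in> allwords d" using assms by (auto simp: allwords_def)
  have su: "set u \<subseteq> letters d" "set v \<subseteq> letters d" using assms by (auto simp: allwords_def)
  define e where "e w = ln (measure \<nu> (cyl d w)) - (Psi d \<psi> w - real (length w) * PP)" for w
  have e: "\<bar>e u\<bar> \<le> \<bar>ln Cg\<bar>" "\<bar>e v\<bar> \<le> \<bar>ln Cg\<bar>" "\<bar>e (u @ v)\<bar> \<le> \<bar>ln Cg\<bar>"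
    unfolding e_def by (rule nu_pos(2)[OF assms(1)], rule nu_pos(2)[OF assms(2)], rule nu_pos(2)[OF uv])
  have "ln (mu (u @ v)) - ln (mu u) - ln (mu v) = - ln K + \<alpha> * ((Psi d \<psi> (u @ v) - Psi d \<psi> u - Psi d \<psi> v)
     + (e (u @ v) - e u - e v))"
    unfolding mu_pos(2)[OF uv] mu_pos(2)[OF assms(1)] mu_pos(2)[OF assms(2)] e_def
    by (simp add: algebra_simps)
  also have "\<bar>\<dots>\<bar> \<le> \<bar>ln K\<bar> + \<alpha> * \<bar>(Psi d \<psi> (u @ v) - Psi d \<psi> u - Psi d \<psi> v) + (e (u @ v) - e u - e v)\<bar>"
    using apos by (intro ah1) auto
  also have "\<dots> \<le> GG" unfolding GG_def using Psi_add[OF su] e apos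
    by (intro add_left_mono mult_left_mono) auto
  finally show ?thesis .
qed

definition "AA = \<bar>ln K\<bar> + \<alpha> * (\<bar>ln Cg\<bar> + DD)"
definition "BB = \<alpha> * (Bp + \<bar>PP\<bar>) + \<beta>"

lemma ln_mu_abs: assumes "w \<in> allwords d" shows "\<bar>ln (mu w)\<bar> \<le> AA + BB * real (length w)"
proof -
  have su: "set w \<subseteq> letters d" using assms by (auto simp: allwords_def)
  have "\<bar>ln (measure \<nu> (cyl d w))\<bar> \<le> \<bar>ln Cg\<bar> + (real (length w) * Bp + DD) + real (length w) * \<bar>PP\<bar>"
  proof -
    have "\<bar>real (length w) * PP\<bar> = real (length w) * \<bar>PP\<bar>" by (simp add: abs_mult)
    then show ?thesis using nu_pos(2)[OF assms] Psi_abs[OF su] by linarith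
  qed
  then have "\<alpha> * \<bar>ln (measure \<nu> (cyl d w))\<bar> \<le> \<alpha> * (\<bar>ln Cg\<bar> + (real (length w) * Bp + DD) + real (length w) * \<bar>PP\<bar>)"
    using apos by (intro mult_left_mono) auto
  moreover have "\<bar>ln K + \<alpha> * ln (measure \<nu> (cyl d w)) - \<beta> * real (length w)\<bar> \<le>
     \<bar>ln K\<bar> + \<alpha> * \<bar>ln (measure \<nu> (cyl d w))\<bar> + \<beta> * real (length w)"
    using apos bnn by (intro ah2) auto
  ultimately show ?thesis unfolding mu_pos(2)[OF assms] AA_def BB_def using apos bnn
    by (auto simp: algebra_simps)
qed

end


lemma almost_add_conv:
  fixes a :: "nat \<Rightarrow> real"
  assumes B: "B \<ge> 0" and H: "\<And>m n. m \<ge> 1 \<Longrightarrow> n \<ge> 1 \<Longrightarrow> \<bar>a (m + n) - a m - a n\<bar> \<le> B"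
  shows "convergent (\<lambda>j. a j / real j)"
proof -
  define E where "E m = (\<Sum>r\<in>{1..m}. \<bar>a r - (real r / real m) * a m\<bar>)" for m
  have E0: "E m \<ge> 0" for m unfolding E_def by (intro sum_nonneg) auto
  have claim: "\<bar>a j - (real j / real m) * a m\<bar> \<le> (real j / real m) * B + E m"
    if "m \<ge> 1" "j \<ge> 1" for m j
    using that(2)
  proof (induction j rule: less_induct)
    case (less j)
    show ?case
    proof (cases "j \<le> m")
      case True
      have "\<bar>a j - (real j / real m) * a m\<bar> \<le> E m"
        unfolding E_def using True less.prems
        by (intro member_le_sum[where f="\<lambda>r. \<bar>a r - (real r / real m) * a m\<bar>"]) auto
      moreover have "(real j / real m) * B \<ge> 0" using B by simp
      ultimately show ?thesis by linarith
    next
      case False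
      then have jm: "j = (j - m) + m" "j - m \<ge> 1" "j - m < j" using that by auto
      have h1: "\<bar>a j - a (j - m) - a m\<bar> \<le> B" using H[OF jm(2) that(1)] jm(1) by simp
      have h2: "\<bar>a (j - m) - (real (j - m) / real m) * a m\<bar> \<le> (real (j - m) / real m) * B + E m"
        using less.IH[OF jm(3) jm(2)] .
      have rj: "real (j - m) = real j - real m" using False by simp
      have m0: "real m > 0" using that by simp
      have e1: "(real (j - m) / real m) * a m = (real j / real m) * a m - a m"
        using m0 unfolding rj by (simp add: field_simps)
      have e2: "(real (j - m) / real m) * B = (real j / real m) * B - B"
        using m0 unfolding rj by (simp add: field_simps)
      show ?thesis using h1 h2 unfolding e1 e2 by linarith
    qed
  qed
  have bound: "\<bar>a j / real j - a m / real m\<bar> \<le> B / real m + E m / real j"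
    if "m \<ge> 1" "j \<ge> 1" for m j
  proof -
    have j0: "real j > 0" and m0: "real m > 0" using that by auto
    have "a j / real j - a m / real m = (a j - (real j / real m) * a m) / real j"
      using j0 m0 by (simp add: field_simps)
    also have "\<bar>\<dots>\<bar> \<le> ((real j / real m) * B + E m) / real j"
      using claim[OF that] j0 by (simp add: abs_div divide_right_mono)
    also have "\<dots> = B / real m + E m / real j" using j0 m0 by (simp add: field_simps)
    finally show ?thesis .
  qed
  have "Cauchy (\<lambda>j. a j / real j)"
  proof (rule CauchyI)
    fix e :: real assume e: "e > 0"
    obtain m0 :: nat where m0: "4 * B / e < real m0" using reals_Archimedean2 by blast
    define m where "m = Suc m0"
    have m1: "m \<ge> 1" by (simp add: m_def)
    have Bm: "B / real m < e / 4"
    proof -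
      have "4 * B < e * real m" using m0 e by (simp add: m_def field_simps)
      then show ?thesis using m1 by (simp add: field_simps)
    qed
    obtain N0 :: nat where N0: "4 * E m / e < real N0" using reals_Archimedean2 by blast
    define N where "N = Suc N0"
    have EN: "E m / real j < e / 4" if "j \<ge> N" for j
    proof -
      have "4 * E m < e * real N" using N0 e by (simp add: N_def field_simps)
      also have "\<dots> \<le> e * real j" using that e by simp
      finally show ?thesis using that by (simp add: N_def field_simps)
    qed
    show "\<exists>M. \<forall>j\<ge>M. \<forall>k\<ge>M. norm (a j / real j - a k / real k) < e"
    proof (intro exI allI impI)
      fix j k assume j: "j \<ge> N" and k: "k \<ge> N"
      have j1: "j \<ge> 1" and k1: "k \<ge> 1" using j k by (auto simp: N_def)
      have "norm (a j / real j - a k / real k) \<le> \<bar>a j / real j - a m / real m\<bar> + \<bar>a k / real k - a m / real m\<bar>"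
        by simp
      also have "\<dots> < e" using bound[OF m1 j1] bound[OF m1 k1] Bm EN[OF j] EN[OF k] by linarith
      finally show "norm (a j / real j - a k / real k) < e" .
    qed
  qed
  then show ?thesis by (rule Cauchy_convergent)
qed

context gc begin

definition SS where "SS j q = (\<Sum>w\<in>words d j. mu w powr q)"

lemma mu_powr: assumes "w \<in> allwords d" shows "mu w powr q = exp (q * ln (mu w))"
  using mu_pos(1)[OF assms] by (simp add: powr_def mult.commute)

lemma SS_pos: assumes "j \<ge> 1" shows "SS j q > 0"
  unfolding SS_def
proof (intro sum_pos finite_words words_ne)
  fix w assume "w \<in> words d j"
  then have "w \<in> allwords d" by (rule words_allwords[OF assms])
  then show "0 < mu w powr q" using mu_pos(1)[OF \<open>w \<in> allwords d\<close>] by simp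
qed

lemma SS_mult: assumes "m \<ge> 1" "n \<ge> 1"
  shows "exp (- \<bar>q\<bar> * GG) * (SS m q * SS n q) \<le> SS (m + n) q"
        "SS (m + n) q \<le> exp (\<bar>q\<bar> * GG) * (SS m q * SS n q)"
proof -
  have split: "SS (m + n) q = (\<Sum>u\<in>words d m. \<Sum>v\<in>words d n. mu (u @ v) powr q)"
    unfolding SS_def words_append
    apply (simp add: sum.reindex[OF inj_append_words] sum.cartesian_product)
    by (intro sum.cong) auto
  have prod: "SS m q * SS n q = (\<Sum>u\<in>words d m. \<Sum>v\<in>words d n. mu u powr q * mu v powr q)"
    unfolding SS_def by (rule sum_product)
  have tw: "exp (- \<bar>q\<bar> * GG) * (mu u powr q * mu v powr q) \<le> mu (u @ v) powr q \<and>
      mu (u @ v) powr q \<le> exp (\<bar>q\<bar> * GG) * (mu u powr q * mu v powr q)"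
    if u: "u \<in> words d m" and v: "v \<in> words d n" for u v
  proof -
    have ua: "u \<in> allwords d" and va: "v \<in> allwords d" using u v assms words_allwords by auto
    have uva: "u @ v \<in> allwords d" using ua va by (auto simp: allwords_def)
    define X where "X = ln (mu (u @ v)) - ln (mu u) - ln (mu v)"
    have X: "\<bar>X\<bar> \<le> GG" using ln_mu_add[OF ua va] by (simp add: X_def)
    have qX: "\<bar>q * X\<bar> \<le> \<bar>q\<bar> * GG" using X by (simp add: abs_mult mult_left_mono)
    have eq: "q * ln (mu (u @ v)) = q * X + q * ln (mu u) + q * ln (mu v)"
      by (simp add: X_def algebra_simps)
    have "exp (- \<bar>q\<bar> * GG) * (mu u powr q * mu v powr q) = exp (- \<bar>q\<bar> * GG + q * ln (mu u) + q * ln (mu v))"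
      unfolding mu_powr[OF ua] mu_powr[OF va] by (simp only: exp_add mult.assoc)
    also have "\<dots> \<le> mu (u @ v) powr q" unfolding mu_powr[OF uva] eq using qX by simp
    finally have l: "exp (- \<bar>q\<bar> * GG) * (mu u powr q * mu v powr q) \<le> mu (u @ v) powr q" .
    have "mu (u @ v) powr q \<le> exp (\<bar>q\<bar> * GG + q * ln (mu u) + q * ln (mu v))"
      unfolding mu_powr[OF uva] eq using qX by simp
    also have "\<dots> = exp (\<bar>q\<bar> * GG) * (mu u powr q * mu v powr q)"
      unfolding mu_powr[OF ua] mu_powr[OF va] by (simp only: exp_add mult.assoc)
    finally show ?thesis using l by simp
  qed
  show "exp (- \<bar>q\<bar> * GG) * (SS m q * SS n q) \<le> SS (m + n) q"
    unfolding split prod sum_distrib_left using tw by (intro sum_mono) auto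
  show "SS (m + n) q \<le> exp (\<bar>q\<bar> * GG) * (SS m q * SS n q)"
    unfolding split prod sum_distrib_left using tw by (intro sum_mono) auto
qed

lemma GG_nn: "GG \<ge> 0" unfolding GG_def using apos DD(1) by simp

lemma lnSS_add: assumes "m \<ge> 1" "n \<ge> 1"
  shows "\<bar>ln (SS (m + n) q) - ln (SS m q) - ln (SS n q)\<bar> \<le> \<bar>q\<bar> * GG"
proof -
  have p: "SS m q > 0" "SS n q > 0" "SS (m+n) q > 0" using SS_pos assms by auto
  have "ln (exp (- \<bar>q\<bar> * GG) * (SS m q * SS n q)) \<le> ln (SS (m + n) q)"
    using SS_mult(1)[OF assms, of q] p by (subst ln_le_cancel_iff) auto
  then have l: "- \<bar>q\<bar> * GG + ln (SS m q) + ln (SS n q) \<le> ln (SS (m + n) q)"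
    using p by (simp add: ln_mult)
  have "ln (SS (m + n) q) \<le> ln (exp (\<bar>q\<bar> * GG) * (SS m q * SS n q))"
    using SS_mult(2)[OF assms, of q] p by (subst ln_le_cancel_iff) auto
  then have r: "ln (SS (m + n) q) \<le> \<bar>q\<bar> * GG + ln (SS m q) + ln (SS n q)"
    using p by (simp add: ln_mult)
  show ?thesis using l r by linarith
qed

definition TT where "TT q j = - log 2 (SS j q) / real j"

lemma tau_lim: "TT q \<longlonglongrightarrow> tau d mu q"
proof -
  have c: "convergent (\<lambda>j. ln (SS j q) / real j)"
    using GG_nn by (intro almost_add_conv[where B="\<bar>q\<bar> * GG"] lnSS_add) auto
  have "TT q = (\<lambda>j. - (ln (SS j q) / real j) / ln 2)"
    by (auto simp: TT_def log_def fun_eq_iff)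
  moreover obtain L where L: "(\<lambda>j. ln (SS j q) / real j) \<longlonglongrightarrow> L" using c convergent_def by blast
  have "(\<lambda>j. - (ln (SS j q) / real j) / ln 2) \<longlonglongrightarrow> - L / ln 2" by (intro tendsto_intros L) simp
  ultimately have "TT q \<longlonglongrightarrow> - L / ln 2" by simp
  then have "convergent (TT q)" by (rule convergentI)
  moreover have "tau d mu q = lim (TT q)"
    by (simp add: tau_def TT_def[abs_def] SS_def)
  ultimately show ?thesis by (simp add: convergent_LIMSEQ_iff)
qed

end


lemma exp_sum_ge:
  fixes y :: "'a \<Rightarrow> real"
  assumes "finite A" "A \<noteq> {}"
  shows "real (card A) * exp ((\<Sum>x\<in>A. y x) / real (card A)) \<le> (\<Sum>x\<in>A. exp (y x))"
proof -
  define N where "N = real (card A)"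
  have N0: "N > 0" using assms by (simp add: N_def card_gt_0_iff)
  define m where "m = (\<Sum>x\<in>A. y x) / N"
  have "exp m * (1 + (y x - m)) \<le> exp (y x)" for x
  proof -
    have "1 + (y x - m) \<le> exp (y x - m)" by (rule exp_ge_add_one_self)
    then have "exp m * (1 + (y x - m)) \<le> exp m * exp (y x - m)" by simp
    then show ?thesis by (simp add: exp_diff)
  qed
  then have "(\<Sum>x\<in>A. exp m * (1 + (y x - m))) \<le> (\<Sum>x\<in>A. exp (y x))" by (intro sum_mono)
  moreover have "(\<Sum>x\<in>A. exp m * (1 + (y x - m))) = exp m * (N + (\<Sum>x\<in>A. y x) - N * m)"
    by (simp add: sum_distrib_left[symmetric] sum.distrib sum_subtractf N_def algebra_simps)
  moreover have "N + (\<Sum>x\<in>A. y x) - N * m = N" using N0 by (simp add: m_def)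
  ultimately show ?thesis by (simp add: N_def m_def mult.commute)
qed

context gc begin

definition hh where "hh j = - (\<Sum>w\<in>words d j. ln (mu w)) / (real (card (words d j)) * real j * ln 2)"

lemma TT_upper: assumes "j \<ge> 1" shows "TT q j \<le> - real d + q * hh j"
proof -
  define N where "N = real (card (words d j))"
  have N: "N = 2 ^ (d * j)" by (simp add: N_def card_words)
  have N0: "N > 0" by (simp add: N)
  have lnN: "ln N = real d * real j * ln 2" by (simp add: N ln_realpow)
  have aw: "w \<in> allwords d" if "w \<in> words d j" for w using words_allwords[OF assms that] .
  have SSe: "SS j q = (\<Sum>w\<in>words d j. exp (q * ln (mu w)))"
    unfolding SS_def by (intro sum.cong refl mu_powr aw)
  have "N * exp ((\<Sum>w\<in>words d j. q * ln (mu w)) / N) \<le> SS j q"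
    unfolding SSe N_def by (rule exp_sum_ge[OF finite_words words_ne])
  then have "ln (N * exp ((\<Sum>w\<in>words d j. q * ln (mu w)) / N)) \<le> ln (SS j q)"
    using N0 SS_pos[OF assms] by (subst ln_le_cancel_iff) auto
  then have l: "ln N + q * (\<Sum>w\<in>words d j. ln (mu w)) / N \<le> ln (SS j q)"
    using N0 by (simp add: ln_mult sum_distrib_left[symmetric])
  have j0: "real j > 0" using assms by simp
  have "TT q j = - ln (SS j q) / (real j * ln 2)" by (simp add: TT_def log_def)
  also have "\<dots> \<le> - (ln N + q * (\<Sum>w\<in>words d j. ln (mu w)) / N) / (real j * ln 2)"
    using l j0 by (intro divide_right_mono) auto
  also have "\<dots> = - real d + q * hh j"
    unfolding hh_def N_def[symmetric] lnN using j0 N0 by (simp add: field_simps)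
  finally show ?thesis .
qed

lemma hh_bound: assumes "j \<ge> 1" shows "\<bar>hh j\<bar> \<le> (AA + BB) / ln 2" "hh j \<ge> - ln K / (real j * ln 2)"
proof -
  define N where "N = real (card (words d j))"
  have N0: "N > 0" using finite_words words_ne by (simp add: N_def card_gt_0_iff)
  have j0: "real j \<ge> 1" using assms by simp
  have aw: "w \<in> allwords d" if "w \<in> words d j" for w using words_allwords[OF assms that] .
  have lw: "length w = j" if "w \<in> words d j" for w using that by (simp add: words_def)
  have "\<bar>\<Sum>w\<in>words d j. ln (mu w)\<bar> \<le> (\<Sum>w\<in>words d j. AA + BB * real j)"
    using ln_mu_abs aw lw by (intro order.trans[OF sum_abs] sum_mono) fastforce
  then have s: "\<bar>\<Sum>w\<in>words d j. ln (mu w)\<bar> \<le> N * (AA + BB * real j)" by (simp add: N_def)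
  have BB0: "BB \<ge> 0" unfolding BB_def using apos bnn Bp(1) by simp
  have "\<bar>hh j\<bar> = \<bar>\<Sum>w\<in>words d j. ln (mu w)\<bar> / (N * real j * ln 2)"
    unfolding hh_def N_def[symmetric] using N0 j0 by (simp add: abs_div abs_mult)
  also have "\<dots> \<le> N * (AA + BB * real j) / (N * real j * ln 2)"
    using s N0 j0 by (intro divide_right_mono) auto
  also have "\<dots> = (AA / real j + BB) / ln 2" using N0 j0 by (simp add: field_simps)
  also have "\<dots> \<le> (AA + BB) / ln 2"
  proof -
    have AA0: "AA \<ge> 0" unfolding AA_def using apos DD(1) by simp
    have "AA / real j \<le> AA" using AA0 j0 by (simp add: divide_le_eq mult_le_cancel_left1 order_trans[OF _ mult_left_mono[OF j0 AA0]])
    then show ?thesis by (intro divide_right_mono) auto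
  qed
  finally show "\<bar>hh j\<bar> \<le> (AA + BB) / ln 2" .
  have "(\<Sum>w\<in>words d j. ln (mu w)) \<le> (\<Sum>w\<in>words d j. ln K)"
  proof (intro sum_mono)
    fix w assume "w \<in> words d j"
    then have "w \<in> allwords d" by (rule aw)
    then show "ln (mu w) \<le> ln K" using mu_le_K mu_pos(1) Kpos by simp
  qed
  then have s2: "(\<Sum>w\<in>words d j. ln (mu w)) \<le> N * ln K" by (simp add: N_def)
  have "- ln K / (real j * ln 2) = - (N * ln K) / (N * real j * ln 2)" using N0 by simp
  also have "\<dots> \<le> hh j" unfolding hh_def N_def[symmetric] using s2 N0 j0
    by (intro divide_right_mono) auto
  finally show "hh j \<ge> - ln K / (real j * ln 2)" .
qed

lemma H0_exists: obtains H0 where "H0 \<ge> 0" "\<And>q. tau d mu q \<le> - real d + q * H0"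
proof -
  define g where "g n = hh (Suc n)" for n
  obtain f where f: "strict_mono f" "monoseq (\<lambda>n. g (f n))" using seq_monosub by blast
  have "Bseq (\<lambda>n. g (f n))" using hh_bound(1) by (intro BseqI') (auto simp: g_def)
  then obtain H0 where H0: "(\<lambda>n. g (f n)) \<longlonglongrightarrow> H0"
    using Bseq_monoseq_convergent f(2) convergent_def by blast
  have sm: "strict_mono (Suc \<circ> f)" using f(1) by (auto simp: strict_mono_def)
  have le: "tau d mu q \<le> - real d + q * H0" for q
  proof -
    have a: "(TT q \<circ> (Suc \<circ> f)) \<longlonglongrightarrow> tau d mu q" by (rule LIMSEQ_subseq_LIMSEQ[OF tau_lim sm])
    have b: "(\<lambda>n. - real d + q * g (f n)) \<longlonglongrightarrow> - real d + q * H0" by (intro tendsto_intros H0)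
    show ?thesis
      by (rule LIMSEQ_le[OF a b]) (use TT_upper in \<open>auto simp: g_def\<close>)
  qed
  have nn: "H0 \<ge> 0"
  proof -
    have a: "(\<lambda>n. (- \<bar>ln K\<bar> / ln 2) * inverse (real (Suc n))) \<longlonglongrightarrow> (- \<bar>ln K\<bar> / ln 2) * 0"
      by (intro tendsto_intros LIMSEQ_inverse_real_of_nat)
    have "(- \<bar>ln K\<bar> / ln 2) * inverse (real (Suc n)) \<le> g (f n)" for n
    proof -
      have s: "real (Suc n) \<le> real (Suc (f n))" using seq_suble[OF f(1), of n] by simp
      have "(- \<bar>ln K\<bar> / ln 2) * inverse (real (Suc n)) = - (\<bar>ln K\<bar> / (real (Suc n) * ln 2))"
        by (simp add: field_simps)
      also have "\<dots> \<le> - (\<bar>ln K\<bar> / (real (Suc (f n)) * ln 2))"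
        using s by (intro le_imp_neg_le divide_left_mono mult_right_mono) auto
      also have "\<dots> \<le> - ln K / (real (Suc (f n)) * ln 2)"
        unfolding minus_divide_left by (intro divide_right_mono) auto
      also have "\<dots> \<le> g (f n)" unfolding g_def by (rule hh_bound(2)) simp
      finally show ?thesis .
    qed
    then show ?thesis using LIMSEQ_le[OF a H0] by auto
  qed
  show ?thesis using that nn le by blast
qed

end


locale gce = gc +
  fixes \<eta> :: real
  assumes eta: "0 < \<eta>" "\<eta> < 1"
begin

definition "cc = real d * (1 - \<eta>)"

lemma cc: "cc \<le> real d" "cc > 0" using eta d1 by (auto simp: cc_def mult_le_cancel_left1)

lemma Dmu_ge: "ereal c \<le> Dmu d mu H \<longleftrightarrow> (\<forall>q. c \<le> q * H - tau d mu q)"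
  by (simp add: Dmu_def le_INF_iff)

definition "H0 = (SOME H. H \<ge> 0 \<and> (\<forall>q. tau d mu q \<le> - real d + q * H))"

lemma H0: "H0 \<ge> 0" "ereal cc \<le> Dmu d mu H0"
proof -
  have "\<exists>H. H \<ge> 0 \<and> (\<forall>q. tau d mu q \<le> - real d + q * H)" using H0_exists by metis
  from someI_ex[OF this] have h: "H0 \<ge> 0" "\<And>q. tau d mu q \<le> - real d + q * H0"
    unfolding H0_def by auto
  show "H0 \<ge> 0" by (rule h(1))
  show "ereal cc \<le> Dmu d mu H0" unfolding Dmu_ge using h(2) cc(1) by (smt (verit))
qed

abbreviation "SL \<equiv> {H. H \<ge> 0 \<and> Dmu d mu H \<ge> ereal (real d * (1 - \<eta>))}"
abbreviation "SR \<equiv> {H. Dmu d mu H \<ge> ereal (real d * (1 - \<eta>))}"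

lemma SL: "H0 \<in> SL" "bdd_below SL" using H0 by (auto simp: cc_def bdd_below_def)

lemma SR: "H0 \<in> SR" "bdd_above SR"
proof -
  show "H0 \<in> SR" using H0 by (auto simp: cc_def)
  have "H \<le> - tau d mu (-1) - cc" if "H \<in> SR" for H
    using that unfolding Dmu_ge cc_def[symmetric] by (auto dest: spec[where x="-1"])
  then show "bdd_above SR" by (auto simp: bdd_above_def)
qed

lemma Hl_props: "Hl d mu \<eta> \<ge> 0" "Hl d mu \<eta> \<le> H0"
proof -
  show "Hl d mu \<eta> \<ge> 0" unfolding Hl_def using SL(1) by (intro cInf_greatest) auto
  show "Hl d mu \<eta> \<le> H0" unfolding Hl_def by (rule cInf_lower[OF SL])
qed

lemma Hr_props: "H0 \<le> Hr d mu \<eta>"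
  unfolding Hr_def by (rule cSup_upper[OF SR])

lemma low_q: assumes "0 \<le> H" "H < Hl d mu \<eta>"
  obtains q where "q \<ge> 0" "q * H - tau d mu q < cc"
proof -
  have "H \<notin> SL" using cInf_lower[OF _ SL(2), of H] assms unfolding Hl_def by auto
  then have "\<not> ereal cc \<le> Dmu d mu H" using assms(1) by (auto simp: cc_def)
  then obtain q where q: "q * H - tau d mu q < cc" unfolding Dmu_ge by (auto simp: not_le)
  have "q \<ge> 0"
  proof (rule ccontr)
    assume "\<not> q \<ge> 0"
    then have "q * H0 \<le> q * H" using Hl_props assms by (intro mult_left_mono_neg) auto
    moreover have "cc \<le> q * H0 - tau d mu q" using H0(2) unfolding Dmu_ge by auto
    ultimately show False using q by linarith
  qed
  then show ?thesis using that q by blast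
qed

lemma high_q: assumes "Hr d mu \<eta> < H"
  obtains q where "q \<le> 0" "q * H - tau d mu q < cc"
proof -
  have "H \<notin> SR" using cSup_upper[OF _ SR(2), of H] assms unfolding Hr_def by auto
  then have "\<not> ereal cc \<le> Dmu d mu H" by (auto simp: cc_def)
  then obtain q where q: "q * H - tau d mu q < cc" unfolding Dmu_ge by (auto simp: not_le)
  have "q \<le> 0"
  proof (rule ccontr)
    assume "\<not> q \<le> 0"
    then have "q * H0 \<le> q * H" using Hr_props assms by (intro mult_left_mono) auto
    moreover have "cc \<le> q * H0 - tau d mu q" using H0(2) unfolding Dmu_ge by auto
    ultimately show False using q by linarith
  qed
  then show ?thesis using that q by blast
qed

lemma cheb: assumes "j \<ge> 1"
  shows "real (card {w\<in>words d j. q * (ln (mu w) + real j * H * ln 2) \<ge> 0}) * exp (- q * real j * H * ln 2)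
    \<le> SS j q"
proof -
  define A where "A = {w\<in>words d j. q * (ln (mu w) + real j * H * ln 2) \<ge> 0}"
  have aw: "w \<in> allwords d" if "w \<in> words d j" for w using words_allwords[OF assms that] .
  have "real (card A) * exp (- q * real j * H * ln 2) = (\<Sum>w\<in>A. exp (- q * real j * H * ln 2))" by simp
  also have "\<dots> \<le> (\<Sum>w\<in>A. mu w powr q)"
  proof (intro sum_mono)
    fix w assume w: "w \<in> A"
    then have "- q * real j * H * ln 2 \<le> q * ln (mu w)" by (simp add: A_def algebra_simps)
    then show "exp (- q * real j * H * ln 2) \<le> mu w powr q" using w aw by (simp add: A_def mu_powr)
  qed
  also have "\<dots> \<le> SS j q" unfolding SS_def
    by (intro sum_mono2 finite_words) (auto simp: A_def)
  finally show ?thesis by (simp add: A_def)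
qed

lemma count_bound: assumes "q * H - tau d mu q < cc"
  obtains \<rho> where "\<rho> > 0" "\<forall>\<^sub>F j in sequentially.
     real (card {w\<in>words d j. q * (ln (mu w) + real j * H * ln 2) \<ge> 0}) \<le> exp (real j * (cc - \<rho>) * ln 2)"
proof -
  define \<gamma> where "\<gamma> = cc - (q * H - tau d mu q)"
  have g: "\<gamma> > 0" using assms by (simp add: \<gamma>_def)
  have ev: "\<forall>\<^sub>F j in sequentially. TT q j > tau d mu q - \<gamma> / 2"
    using order_tendstoD(1)[OF tau_lim] g by simp
  have "\<forall>\<^sub>F j in sequentially.
     real (card {w\<in>words d j. q * (ln (mu w) + real j * H * ln 2) \<ge> 0}) \<le> exp (real j * (cc - \<gamma>/2) * ln 2)"
    using ev eventually_ge_at_top[of 1]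
  proof eventually_elim
    case (elim j)
    define N where "N = real (card {w\<in>words d j. q * (ln (mu w) + real j * H * ln 2) \<ge> 0})"
    have j0: "real j > 0" using elim by simp
    have S0: "SS j q > 0" using SS_pos elim by simp
    have "- ln (SS j q) / (real j * ln 2) > tau d mu q - \<gamma> / 2"
      using elim(1) by (simp add: TT_def log_def mult.commute)
    then have "(- ln (SS j q)) / (real j * ln 2) > tau d mu q - \<gamma> / 2" by simp
    moreover have pos: "real j * ln 2 > 0" using j0 by simp
    ultimately have "- ln (SS j q) > (tau d mu q - \<gamma> / 2) * (real j * ln 2)"
      using pos_less_divide_eq[OF pos] by blast
    then have lS: "ln (SS j q) < - (tau d mu q - \<gamma> / 2) * (real j * ln 2)" by linarith
    have "N * exp (- q * real j * H * ln 2) \<le> SS j q" unfolding N_def by (rule cheb) (use elim in simp)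
    also have "\<dots> = exp (ln (SS j q))" using S0 by simp
    also have "\<dots> \<le> exp (- (tau d mu q - \<gamma> / 2) * (real j * ln 2))" using lS by simp
    finally have "N \<le> exp (- (tau d mu q - \<gamma> / 2) * (real j * ln 2)) / exp (- q * real j * H * ln 2)"
      by (simp add: pos_le_divide_eq)
    also have "\<dots> = exp (real j * (q * H - tau d mu q + \<gamma> / 2) * ln 2)"
      by (simp add: exp_diff[symmetric] algebra_simps)
    also have "\<dots> = exp (real j * (cc - \<gamma> / 2) * ln 2)"
    proof -
      have "q * H - tau d mu q + \<gamma> / 2 = cc - \<gamma> / 2" by (simp add: \<gamma>_def field_simps)
      then show ?thesis by simp
    qed
    finally show ?case unfolding N_def .
  qed
  then show ?thesis using that[of "\<gamma>/2"] g by simp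
qed

end


lemma BC:
  fixes \<Omega> :: "'o measure" and p :: "bool list list \<Rightarrow> 'o \<Rightarrow> bool"
  assumes ps: "prob_space \<Omega>"
  and meas: "\<And>w. w \<in> allwords d \<Longrightarrow> {\<omega>\<in>space \<Omega>. p w \<omega>} \<in> sets \<Omega>"
  and pr: "\<And>w. w \<in> allwords d \<Longrightarrow> measure \<Omega> {\<omega>\<in>space \<Omega>. p w \<omega>} = 2 powr (- (c * real (length w)))"
  and sub: "\<And>j. B j \<subseteq> words d j"
  and \<rho>: "\<rho> > 0"
  and ev: "\<forall>\<^sub>F j in sequentially. real (card (B j)) \<le> exp (real j * (c - \<rho>) * ln 2)"
  shows "AE \<omega> in \<Omega>. \<forall>\<^sub>F j in sequentially. \<forall>w\<in>B j. \<not> p w \<omega>"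
proof -
  interpret prob_space \<Omega> by (rule ps)
  define A where "A j = (\<Union>w\<in>B j \<inter> allwords d. {\<omega>\<in>space \<Omega>. p w \<omega>})" for j
  have finB: "finite (B j)" for j using finite_subset[OF sub finite_words] .
  have Ameas: "A j \<in> sets \<Omega>" for j unfolding A_def using finB meas by (intro sets.finite_UN) auto
  have Afin: "emeasure \<Omega> (A j) < \<infinity>" for j using emeasure_finite[of "A j"] by (simp add: less_top[symmetric])
  have mA: "measure \<Omega> (A j) \<le> real (card (B j)) * 2 powr (- (c * real j))" for j
  proof -
    have "measure \<Omega> (A j) \<le> (\<Sum>w\<in>B j \<inter> allwords d. measure \<Omega> {\<omega>\<in>space \<Omega>. p w \<omega>})"
      unfolding A_def using finB meas by (intro measure_UNION_le) auto
    also have "\<dots> = (\<Sum>w\<in>B j \<inter> allwords d. 2 powr (- (c * real j)))"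
      using sub by (intro sum.cong refl) (auto simp: pr words_def)
    also have "\<dots> \<le> (\<Sum>w\<in>B j. 2 powr (- (c * real j)))"
      using finB by (intro sum_mono2) auto
    finally show ?thesis by simp
  qed
  obtain N where N: "\<And>j. j \<ge> N \<Longrightarrow> real (card (B j)) \<le> exp (real j * (c - \<rho>) * ln 2)"
    using ev unfolding eventually_sequentially by blast
  define r where "r = exp (- \<rho> * ln 2)"
  have r: "norm r < 1" using \<rho> by (simp add: r_def)
  have "summable (\<lambda>j. measure \<Omega> (A j))"
  proof (rule summable_comparison_test'[OF summable_geometric[OF r]])
    fix j assume j: "N \<le> j"
    have "measure \<Omega> (A j) \<le> real (card (B j)) * 2 powr (- (c * real j))" by (rule mA)
    also have "\<dots> \<le> exp (real j * (c - \<rho>) * ln 2) * 2 powr (- (c * real j))"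
      using N[OF j] by (intro mult_right_mono) auto
    also have "\<dots> = exp (real j * (c - \<rho>) * ln 2 + (- (c * real j)) * ln 2)"
      by (simp add: powr_def mult_exp_exp)
    also have "\<dots> = exp (real j * (- \<rho> * ln 2))" by (simp add: algebra_simps)
    also have "\<dots> = r ^ j" unfolding r_def by (metis exp_of_nat_mult mult_minus_right)
    finally show "norm (measure \<Omega> (A j)) \<le> r ^ j" by simp
  qed
  then have "AE x in \<Omega>. \<forall>\<^sub>F n in sequentially. x \<in> space \<Omega> - A n"
    using Ameas Afin by (intro borel_cantelli_AE1) auto
  then show ?thesis
  proof (rule AE_mp, intro AE_I2 impI)
    fix x assume x: "x \<in> space \<Omega>" and e: "\<forall>\<^sub>F n in sequentially. x \<in> space \<Omega> - A n"
    show "\<forall>\<^sub>F j in sequentially. \<forall>w\<in>B j. \<not> p w x"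
      using e eventually_ge_at_top[of 1]
    proof eventually_elim
      case (elim j)
      show ?case
      proof
        fix w assume w: "w \<in> B j"
        then have "w \<in> allwords d" using sub elim(2) words_allwords by blast
        then show "\<not> p w x" using elim(1) w x by (auto simp: A_def)
      qed
    qed
  qed
qed

context gce begin

lemma log_mu: "w \<in> allwords d \<Longrightarrow> log 2 (mu w) = ln (mu w) / ln 2" by (simp add: log_def)

lemma low_bound: assumes "\<delta> > 0"
  obtains \<rho> where "\<rho> > 0" "\<forall>\<^sub>F j in sequentially.
    real (card {w\<in>words d j. - log 2 (mu w) < real j * (Hl d mu \<eta> - \<delta>)}) \<le> exp (real j * (cc - \<rho>) * ln 2)"
proof (cases "Hl d mu \<eta> - \<delta> \<ge> 0")
  case True
  define H where "H = Hl d mu \<eta> - \<delta>"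
  obtain q where q: "q \<ge> 0" "q * H - tau d mu q < cc" using low_q[of H] True assms by (auto simp: H_def)
  obtain \<rho> where \<rho>: "\<rho> > 0" and ev: "\<forall>\<^sub>F j in sequentially.
     real (card {w\<in>words d j. q * (ln (mu w) + real j * H * ln 2) \<ge> 0}) \<le> exp (real j * (cc - \<rho>) * ln 2)"
    using count_bound[OF q(2)] by blast
  have "\<forall>\<^sub>F j in sequentially.
    real (card {w\<in>words d j. - log 2 (mu w) < real j * (Hl d mu \<eta> - \<delta>)}) \<le> exp (real j * (cc - \<rho>) * ln 2)"
    using ev eventually_ge_at_top[of 1]
  proof eventually_elim
    case (elim j)
    have "{w\<in>words d j. - log 2 (mu w) < real j * (Hl d mu \<eta> - \<delta>)} \<subseteq>
          {w\<in>words d j. q * (ln (mu w) + real j * H * ln 2) \<ge> 0}"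
    proof safe
      fix w assume w: "w \<in> words d j" "- log 2 (mu w) < real j * (Hl d mu \<eta> - \<delta>)"
      then have "w \<in> allwords d" using elim(2) words_allwords by blast
      then have "- ln (mu w) / ln 2 < real j * H" using w by (simp add: log_mu H_def)
      then have "- ln (mu w) < real j * H * ln 2" by (simp add: field_simps)
      then show "q * (ln (mu w) + real j * H * ln 2) \<ge> 0" using q(1) by simp
    qed
    then have "card {w\<in>words d j. - log 2 (mu w) < real j * (Hl d mu \<eta> - \<delta>)} \<le>
          card {w\<in>words d j. q * (ln (mu w) + real j * H * ln 2) \<ge> 0}"
      by (intro card_mono) (auto intro: finite_subset[OF _ finite_words[of d j]])
    then show ?case using elim(1) by linarith
  qed
  then show ?thesis using that \<rho> by blast
next
  case False
  obtain N :: nat where N: "\<bar>log 2 K\<bar> / (\<delta> - Hl d mu \<eta>) < real N" using reals_Archimedean2 by blast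
  have "\<forall>\<^sub>F j in sequentially.
    real (card {w\<in>words d j. - log 2 (mu w) < real j * (Hl d mu \<eta> - \<delta>)}) \<le> exp (real j * (cc - cc) * ln 2)"
    using eventually_ge_at_top[of "max 1 N"]
  proof eventually_elim
    case (elim j)
    have pos: "\<delta> - Hl d mu \<eta> > 0" using False by simp
    have "\<bar>log 2 K\<bar> < real N * (\<delta> - Hl d mu \<eta>)" using N pos by (simp add: divide_less_eq)
    also have "\<dots> \<le> real j * (\<delta> - Hl d mu \<eta>)" using elim pos by (intro mult_right_mono) auto
    finally have jj: "real j * (Hl d mu \<eta> - \<delta>) < - \<bar>log 2 K\<bar>" by (simp add: algebra_simps)
    have "{w\<in>words d j. - log 2 (mu w) < real j * (Hl d mu \<eta> - \<delta>)} = {}"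
    proof safe
      fix w assume w: "w \<in> words d j" "- log 2 (mu w) < real j * (Hl d mu \<eta> - \<delta>)"
      then have aw: "w \<in> allwords d" using elim words_allwords by auto
      have "log 2 (mu w) \<le> log 2 K" using mu_le_K[OF aw] mu_pos(1)[OF aw] Kpos by simp
      then show "w \<in> {}" using w(2) jj by linarith
    qed
    then show ?case by (simp only: card.empty) simp
  qed
  then show ?thesis using that[of cc] cc by blast
qed

lemma high_bound: assumes "\<delta> > 0"
  obtains \<rho> where "\<rho> > 0" "\<forall>\<^sub>F j in sequentially.
    real (card {w\<in>words d j. real j * (Hr d mu \<eta> + \<delta>) < - log 2 (mu w)}) \<le> exp (real j * (cc - \<rho>) * ln 2)"
proof -
  define H where "H = Hr d mu \<eta> + \<delta>"
  obtain q where q: "q \<le> 0" "q * H - tau d mu q < cc" using high_q[of H] assms by (auto simp: H_def)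
  obtain \<rho> where \<rho>: "\<rho> > 0" and ev: "\<forall>\<^sub>F j in sequentially.
     real (card {w\<in>words d j. q * (ln (mu w) + real j * H * ln 2) \<ge> 0}) \<le> exp (real j * (cc - \<rho>) * ln 2)"
    using count_bound[OF q(2)] by blast
  have "\<forall>\<^sub>F j in sequentially.
    real (card {w\<in>words d j. real j * (Hr d mu \<eta> + \<delta>) < - log 2 (mu w)}) \<le> exp (real j * (cc - \<rho>) * ln 2)"
    using ev eventually_ge_at_top[of 1]
  proof eventually_elim
    case (elim j)
    have "{w\<in>words d j. real j * (Hr d mu \<eta> + \<delta>) < - log 2 (mu w)} \<subseteq>
          {w\<in>words d j. q * (ln (mu w) + real j * H * ln 2) \<ge> 0}"
    proof safe
      fix w assume w: "w \<in> words d j" "real j * (Hr d mu \<eta> + \<delta>) < - log 2 (mu w)"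
      then have "w \<in> allwords d" using elim(2) words_allwords by blast
      then have "real j * H < - ln (mu w) / ln 2" using w by (simp add: log_mu H_def)
      then have "real j * H * ln 2 < - ln (mu w)" by (simp add: field_simps)
      then show "q * (ln (mu w) + real j * H * ln 2) \<ge> 0" using q(1)
        by (intro mult_nonpos_nonpos) auto
    qed
    then have "card {w\<in>words d j. real j * (Hr d mu \<eta> + \<delta>) < - log 2 (mu w)} \<le>
          card {w\<in>words d j. q * (ln (mu w) + real j * H * ln 2) \<ge> 0}"
      by (intro card_mono) (auto intro: finite_subset[OF _ finite_words[of d j]])
    then show ?case using elim(1) by linarith
  qed
  then show ?thesis using that \<rho> by blast
qed

end


context gce begin

lemma good_delta:
  fixes \<Omega> :: "'o measure" and p :: "bool list list \<Rightarrow> 'o \<Rightarrow> bool"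
  assumes ps: "prob_space \<Omega>"
  and meas: "\<And>w. w \<in> allwords d \<Longrightarrow> {\<omega>\<in>space \<Omega>. p w \<omega>} \<in> sets \<Omega>"
  and pr: "\<And>w. w \<in> allwords d \<Longrightarrow> measure \<Omega> {\<omega>\<in>space \<Omega>. p w \<omega>} = 2 powr (- (cc * real (length w)))"
  and \<delta>: "\<delta> > 0"
  shows "AE \<omega> in \<Omega>. \<forall>\<^sub>F j in sequentially. \<forall>w\<in>words d j. p w \<omega> \<longrightarrow>
     real j * (Hl d mu \<eta> - \<delta>) \<le> - log 2 (mu w) \<and> - log 2 (mu w) \<le> real j * (Hr d mu \<eta> + \<delta>)"
proof -
  obtain \<rho>1 where r1: "\<rho>1 > 0" "\<forall>\<^sub>F j in sequentially.
    real (card {w\<in>words d j. - log 2 (mu w) < real j * (Hl d mu \<eta> - \<delta>)}) \<le> exp (real j * (cc - \<rho>1) * ln 2)"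
    using low_bound[OF \<delta>] by blast
  obtain \<rho>2 where r2: "\<rho>2 > 0" "\<forall>\<^sub>F j in sequentially.
    real (card {w\<in>words d j. real j * (Hr d mu \<eta> + \<delta>) < - log 2 (mu w)}) \<le> exp (real j * (cc - \<rho>2) * ln 2)"
    using high_bound[OF \<delta>] by blast
  have A1: "AE \<omega> in \<Omega>. \<forall>\<^sub>F j in sequentially. \<forall>w\<in>{w\<in>words d j. - log 2 (mu w) < real j * (Hl d mu \<eta> - \<delta>)}. \<not> p w \<omega>"
    by (rule BC[OF ps meas pr _ r1]) auto
  have A2: "AE \<omega> in \<Omega>. \<forall>\<^sub>F j in sequentially. \<forall>w\<in>{w\<in>words d j. real j * (Hr d mu \<eta> + \<delta>) < - log 2 (mu w)}. \<not> p w \<omega>"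
    by (rule BC[OF ps meas pr _ r2]) auto
  show ?thesis using A1 A2
  proof eventually_elim
    case (elim \<omega>)
    from elim(1) elim(2) show ?case
    proof eventually_elim
      case (elim j)
      then show ?case by (auto simp: not_less)
    qed
  qed
qed

lemma main:
  fixes \<Omega> :: "'o measure" and p :: "bool list list \<Rightarrow> 'o \<Rightarrow> bool"
  assumes ps: "prob_space \<Omega>"
  and meas: "\<And>w. w \<in> allwords d \<Longrightarrow> {\<omega>\<in>space \<Omega>. p w \<omega>} \<in> sets \<Omega>"
  and pr: "\<And>w. w \<in> allwords d \<Longrightarrow> measure \<Omega> {\<omega>\<in>space \<Omega>. p w \<omega>} = 2 powr (- (cc * real (length w)))"
  shows "AE \<omega> in \<Omega>. \<exists>\<epsilon>::nat \<Rightarrow> real. (\<forall>j. 0 < \<epsilon> j) \<and> \<epsilon> \<longlonglongrightarrow> 0 \<and>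
           (\<forall>\<^sub>F j in sequentially. \<forall>w\<in>words d j. p w \<omega> \<longrightarrow>
              real j * (Hl d mu \<eta> - \<epsilon> j) \<le> - log 2 (mu w) \<and>
              - log 2 (mu w) \<le> real j * (Hr d mu \<eta> + \<epsilon> j))"
proof -
  have "AE \<omega> in \<Omega>. \<forall>n::nat. \<forall>\<^sub>F j in sequentially. \<forall>w\<in>words d j. p w \<omega> \<longrightarrow>
     real j * (Hl d mu \<eta> - 1 / real (Suc n)) \<le> - log 2 (mu w) \<and> - log 2 (mu w) \<le> real j * (Hr d mu \<eta> + 1 / real (Suc n))"
    unfolding AE_all_countable by (intro allI good_delta[OF ps meas pr]) auto
  then show ?thesis
  proof eventually_elim
    case (elim \<omega>)
    define L where "L w = - log 2 (mu w)" for w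
    define Hl' where "Hl' = Hl d mu \<eta>"
    define Hr' where "Hr' = Hr d mu \<eta>"
    define M where "M j = insert 0 ((\<lambda>w. max (Hl' - L w / real j) (L w / real j - Hr')) ` {w\<in>words d j. p w \<omega>})" for j
    have Mf: "finite (M j)" for j unfolding M_def using finite_words by auto
    define dev where "dev j = Max (M j)" for j
    have dev0: "dev j \<ge> 0" for j unfolding dev_def using Mf by (intro Max_ge) (auto simp: M_def)
    have devw: "Hl' - L w / real j \<le> dev j \<and> L w / real j - Hr' \<le> dev j" if "w \<in> words d j" "p w \<omega>" for j w
    proof -
      have "max (Hl' - L w / real j) (L w / real j - Hr') \<in> M j" using that by (auto simp: M_def)
      then have "max (Hl' - L w / real j) (L w / real j - Hr') \<le> dev j" unfolding dev_def using Mf by (intro Max_ge)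
      then show ?thesis by simp
    qed
    define \<epsilon> where "\<epsilon> j = dev j + inverse (real (Suc j))" for j
    have pos: "\<forall>j. 0 < \<epsilon> j" using dev0 by (auto simp: \<epsilon>_def add_nonneg_pos)
    have devlim: "dev \<longlonglongrightarrow> 0"
    proof (rule LIMSEQ_I)
      fix r :: real assume r: "r > 0"
      obtain n :: nat where n: "inverse r < real n" using reals_Archimedean2 by blast
      have nr: "1 / real (Suc n) < r"
      proof -
        have "inverse r < real (Suc n)" using n by simp
        then have "1 < r * real (Suc n)" using r by (simp add: field_simps)
        then show ?thesis by (simp add: field_simps)
      qed
      from elim[rule_format, of n] eventually_ge_at_top[of 1]
      have "\<forall>\<^sub>F j in sequentially. dev j \<le> 1 / real (Suc n)"
      proof eventually_elim
        case (elim j)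
        have j0: "real j > 0" using elim(2) by simp
        show ?case unfolding dev_def
        proof (subst Max_le_iff[OF Mf])
          show "M j \<noteq> {}" by (simp add: M_def)
          show "\<forall>a\<in>M j. a \<le> 1 / real (Suc n)"
          proof
            fix a assume "a \<in> M j"
            then consider "a = 0" | w where "w \<in> words d j" "p w \<omega>" "a = max (Hl' - L w / real j) (L w / real j - Hr')"
              by (auto simp: M_def)
            then show "a \<le> 1 / real (Suc n)"
            proof cases
              case 1 then show ?thesis by simp
            next
              case 2
              then have b: "real j * (Hl' - 1 / real (Suc n)) \<le> L w" "L w \<le> real j * (Hr' + 1 / real (Suc n))"
                using elim(1) by (auto simp: L_def Hl'_def Hr'_def)
              have "Hl' - L w / real j \<le> 1 / real (Suc n)" using b(1) j0 by (simp add: field_simps)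
              moreover have "L w / real j - Hr' \<le> 1 / real (Suc n)" using b(2) j0 by (simp add: field_simps)
              ultimately show ?thesis using 2(3) by simp
            qed
          qed
        qed
      qed
      then show "\<exists>no. \<forall>j\<ge>no. norm (dev j - 0) < r"
        unfolding eventually_sequentially using dev0 nr
        by (metis diff_zero le_less_trans real_norm_def abs_of_nonneg)
    qed
    have elim_lim: "\<epsilon> \<longlonglongrightarrow> 0"
    proof -
      have "(\<lambda>j. dev j + inverse (real (Suc j))) \<longlonglongrightarrow> 0 + 0"
        by (intro tendsto_add devlim LIMSEQ_inverse_real_of_nat)
      then show ?thesis by (simp add: \<epsilon>_def[abs_def])
    qed
    have ev: "\<forall>\<^sub>F j in sequentially. \<forall>w\<in>words d j. p w \<omega> \<longrightarrow>
              real j * (Hl d mu \<eta> - \<epsilon> j) \<le> - log 2 (mu w) \<and>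
              - log 2 (mu w) \<le> real j * (Hr d mu \<eta> + \<epsilon> j)"
      using eventually_ge_at_top[of 1]
    proof eventually_elim
      case (elim j)
      have j0: "real j > 0" using elim by simp
      show ?case
      proof (intro ballI impI)
        fix w assume w: "w \<in> words d j" "p w \<omega>"
        have e: "dev j \<le> \<epsilon> j" by (simp add: \<epsilon>_def)
        have a: "Hl' - L w / real j \<le> \<epsilon> j" "L w / real j - Hr' \<le> \<epsilon> j" using devw[OF w] e by auto
        have "real j * (Hl' - \<epsilon> j) \<le> L w" using a(1) j0 by (simp add: field_simps)
        moreover have "L w \<le> real j * (Hr' + \<epsilon> j)" using a(2) j0 by (simp add: field_simps)
        ultimately show "real j * (Hl d mu \<eta> - \<epsilon> j) \<le> - log 2 (mu w) \<and>
              - log 2 (mu w) \<le> real j * (Hr d mu \<eta> + \<epsilon> j)" by (simp add: L_def Hl'_def Hr'_def)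
      qed
    qed
    show ?case using pos elim_lim ev by blast
  qed
qed

end

theorem proposition3:
  fixes d :: nat and K \<alpha> \<beta> \<eta> :: real
    and \<psi> :: "(nat \<Rightarrow> bool list) \<Rightarrow> real"
    and \<nu> :: "(nat \<Rightarrow> bool list) measure"
    and \<Omega> :: "'o measure"
    and p :: "bool list list \<Rightarrow> 'o \<Rightarrow> bool"
  assumes "d \<ge> 1"
    and "K > 0" and "\<alpha> > 0" and "\<beta> \<ge> 0"
    and "holder d \<psi>" and "\<not> cohom_const d \<psi>"
    and "gibbs_measure d \<psi> \<nu>"
    and "0 < \<eta>" and "\<eta> < 1"
    and "prob_space \<Omega>"
    and "prob_space.indep_vars \<Omega> (\<lambda>_. count_space UNIV) p (allwords d)"
    and "\<forall>w\<in>allwords d. prob_space.prob \<Omega> {\<omega>\<in>space \<Omega>. p w \<omega>}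
            = 2 powr (- (real d * (1 - \<eta>) * real (length w)))"
  shows "AE \<omega> in \<Omega>. \<exists>\<epsilon>::nat \<Rightarrow> real. (\<forall>j. 0 < \<epsilon> j) \<and> \<epsilon> \<longlonglongrightarrow> 0 \<and>
           (\<forall>\<^sub>F j in sequentially. \<forall>w\<in>words d j. p w \<omega> \<longrightarrow>
              real j * (Hl d (cap d K \<alpha> \<beta> \<nu>) \<eta> - \<epsilon> j) \<le> - log 2 (cap d K \<alpha> \<beta> \<nu> w) \<and>
              - log 2 (cap d K \<alpha> \<beta> \<nu> w) \<le> real j * (Hr d (cap d K \<alpha> \<beta> \<nu>) \<eta> + \<epsilon> j))"
proof -
  interpret gce d K \<alpha> \<beta> \<psi> \<nu> \<eta>
    using assms by unfold_locales auto
  have meas: "{\<omega>\<in>space \<Omega>. p w \<omega>} \<in> sets \<Omega>" if w: "w \<in> allwords d" for w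
  proof -
    have "p w \<in> measurable \<Omega> (count_space UNIV)"
      using assms(11) w unfolding prob_space.indep_vars_def2[OF assms(10)] by auto
    from measurable_sets[OF this, of "{True}"]
    have "p w -` {True} \<inter> space \<Omega> \<in> sets \<Omega>" by simp
    moreover have "p w -` {True} \<inter> space \<Omega> = {\<omega>\<in>space \<Omega>. p w \<omega>}" by auto
    ultimately show ?thesis by simp
  qed
  have pr: "measure \<Omega> {\<omega>\<in>space \<Omega>. p w \<omega>} = 2 powr (- (cc * real (length w)))"
    if w: "w \<in> allwords d" for w
    using assms(12) w by (simp add: cc_def)
  show ?thesis by (rule main[OF assms(10) meas pr])
qed


end
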